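(* Let $(\Sigma_k^+,d,\sigma)$ be the full one-sided shift on $k\ge 2$ symbols. Then for every $\alpha>0$, $$\widetilde h_{top}(\sigma,\Sigma_k^+)=\log k<(1+\alpha)\log k=h^\alpha_{top}(\sigma,\Sigma_k^+).$$
   Context: $\Sigma_k^+=\{0,\dots,k-1\}^{\mathbb N}$ with points $x=(x_0,x_1,\dots)$, metric $d(x,y)=e^{-n(x,y)}$ where $n(x,y)$ is the first index where $x,y$ disagree ($n(x,x)=\infty$), and $\sigma$ the left shift. For a TDS $(X,d,f)$: $d_n^\alpha(x,y)=\max_{0\le i\le n-1}e^{\alpha i}d(f^ix,f^iy)$; $r_n(f,\alpha,X,\varepsilon)$ is the minimal cardinality of a set $E$ with every $x\in X$ having some $y\in E$ with $d_n^\alpha(x,y)<\varepsilon$; $h^\alpha_{top}(f,X)=\lim_{\varepsilon\to0}\limsup_n\frac1n\log r_n(f,\alpha,X,\varepsilon)$. Neutralized topological entropy: $B_n(x,r)=\{y:d(f^jx,f^jy)<r,\ 0\le j\le n-1\}$; $r_n(X,e^{-n\varepsilon})$ is the smallest number of balls $B_n(x,e^{-n\varepsilon})$ needed to cover $X$; $\widetilde h_{top}(f,X,\varepsilon)=\limsup_{n\to\infty}\frac1n\log r_n(X,e^{-n\varepsilon})$ and $\widetilde h_{top}(f,X)=\lim_{\varepsilon\to0}\widetilde h_{top}(f,X,\varepsilon)$. *)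

theory Defs
  imports "HOL-Analysis.Analysis"
begin

definition shift_space :: "nat \<Rightarrow> (nat \<Rightarrow> nat) set" where
  "shift_space k = {x. \<forall>i. x i < k}"

definition shift :: "(nat \<Rightarrow> nat) \<Rightarrow> (nat \<Rightarrow> nat)" where
  "shift x = (\<lambda>i. x (Suc i))"

definition shift_dist :: "(nat \<Rightarrow> nat) \<Rightarrow> (nat \<Rightarrow> nat) \<Rightarrow> real" where
  "shift_dist x y = (if x = y then 0 else exp (- real (LEAST n. x n \<noteq> y n)))"

definition dist_alpha :: "('a \<Rightarrow> 'a \<Rightarrow> real) \<Rightarrow> ('a \<Rightarrow> 'a) \<Rightarrow> real \<Rightarrow> nat \<Rightarrow> 'a \<Rightarrow> 'a \<Rightarrow> real" where
  "dist_alpha d f \<alpha> n x y = (MAX i \<in> {..<n}. exp (\<alpha> * real i) * d ((f ^^ i) x) ((f ^^ i) y))"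

definition span_alpha :: "('a \<Rightarrow> 'a \<Rightarrow> real) \<Rightarrow> ('a \<Rightarrow> 'a) \<Rightarrow> real \<Rightarrow> 'a set \<Rightarrow> real \<Rightarrow> nat \<Rightarrow> nat" where
  "span_alpha d f \<alpha> X \<epsilon> n =
     Inf {card E | E. finite E \<and> E \<subseteq> X \<and> (\<forall>x\<in>X. \<exists>y\<in>E. dist_alpha d f \<alpha> n x y < \<epsilon>)}"

definition h_top_alpha :: "('a \<Rightarrow> 'a \<Rightarrow> real) \<Rightarrow> ('a \<Rightarrow> 'a) \<Rightarrow> real \<Rightarrow> 'a set \<Rightarrow> ereal" where
  "h_top_alpha d f \<alpha> X =
     Lim (at_right 0) (\<lambda>\<epsilon>. limsup (\<lambda>n. ereal (ln (real (span_alpha d f \<alpha> X \<epsilon> n)) / real n)))"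

definition bowen_ball :: "('a \<Rightarrow> 'a \<Rightarrow> real) \<Rightarrow> ('a \<Rightarrow> 'a) \<Rightarrow> nat \<Rightarrow> 'a \<Rightarrow> real \<Rightarrow> 'a set" where
  "bowen_ball d f n x r = {y. \<forall>j<n. d ((f ^^ j) x) ((f ^^ j) y) < r}"

definition cover_neutral :: "('a \<Rightarrow> 'a \<Rightarrow> real) \<Rightarrow> ('a \<Rightarrow> 'a) \<Rightarrow> 'a set \<Rightarrow> real \<Rightarrow> nat \<Rightarrow> nat" where
  "cover_neutral d f X \<epsilon> n =
     Inf {card E | E. finite E \<and> E \<subseteq> X \<and>
            X \<subseteq> (\<Union>x\<in>E. bowen_ball d f n x (exp (- real n * \<epsilon>)))}"

definition h_top_neutral_eps :: "('a \<Rightarrow> 'a \<Rightarrow> real) \<Rightarrow> ('a \<Rightarrow> 'a) \<Rightarrow> 'a set \<Rightarrow> real \<Rightarrow> ereal" where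
  "h_top_neutral_eps d f X \<epsilon> =
     limsup (\<lambda>n. ereal (ln (real (cover_neutral d f X \<epsilon> n)) / real n))"

definition h_top_neutral :: "('a \<Rightarrow> 'a \<Rightarrow> real) \<Rightarrow> ('a \<Rightarrow> 'a) \<Rightarrow> 'a set \<Rightarrow> ereal" where
  "h_top_neutral d f X = Lim (at_right 0) (\<lambda>\<epsilon>. h_top_neutral_eps d f X \<epsilon>)"

end

theory Submission
  imports Defs "HOL-Library.FuncSet"
begin

lemma shift_pow: "(shift ^^ j) x = (\<lambda>i. x (i + j))"
  by (induction j arbitrary: x) (auto simp: shift_def)

lemma dist_lt:
  assumes "t \<ge> 0"
  shows "shift_dist a b < exp (-t) \<longleftrightarrow> (\<forall>i. real i \<le> t \<longrightarrow> a i = b i)"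
proof (cases "a = b")
  case True then show ?thesis by (simp add: shift_dist_def)
next
  case False
  define L where "L = (LEAST n. a n \<noteq> b n)"
  have ex: "\<exists>n. a n \<noteq> b n" using False by (auto simp: fun_eq_iff)
  have aL: "a L \<noteq> b L" unfolding L_def by (rule LeastI_ex[OF ex])
  have d: "shift_dist a b = exp (- real L)" using False by (simp add: shift_dist_def L_def)
  have "shift_dist a b < exp (-t) \<longleftrightarrow> t < real L" by (simp add: d)
  also have "\<dots> \<longleftrightarrow> (\<forall>i. real i \<le> t \<longrightarrow> a i = b i)"
  proof
    assume "t < real L"
    then show "\<forall>i. real i \<le> t \<longrightarrow> a i = b i"
      using not_less_Least[where P="\<lambda>n. a n \<noteq> b n"] unfolding L_def
      by (metis le_less_trans of_nat_less_iff)
  next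
    assume "\<forall>i. real i \<le> t \<longrightarrow> a i = b i"
    then show "t < real L" using aL by (meson not_less)
  qed
  finally show ?thesis .
qed

lemma idx:
  assumes "n \<ge> 1" "\<forall>j<n. 0 \<le> t j \<and> t j \<le> t (n-1)"
  shows "(\<forall>j<n. \<forall>i. real i \<le> t j \<longrightarrow> P (i+j)) \<longleftrightarrow> (\<forall>p < n + nat \<lfloor>t (n-1)\<rfloor>. P p)"
proof
  assume H: "\<forall>j<n. \<forall>i. real i \<le> t j \<longrightarrow> P (i+j)"
  show "\<forall>p < n + nat \<lfloor>t (n-1)\<rfloor>. P p"
  proof (intro allI impI)
    fix p assume p: "p < n + nat \<lfloor>t (n-1)\<rfloor>"
    show "P p"
    proof (cases "p < n")
      case True
      then show ?thesis using H assms(2) by (metis add_0 of_nat_0)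
    next
      case False
      define i where "i = p - (n-1)"
      have "i \<le> nat \<lfloor>t (n-1)\<rfloor>" using p False assms(1) unfolding i_def by linarith
      then have "real i \<le> t (n-1)"
      proof -
        have T0: "0 \<le> t (n-1)" using assms by (metis diff_less less_le_trans zero_less_one)
        have "real i \<le> real (nat \<lfloor>t (n-1)\<rfloor>)" using \<open>i \<le> nat \<lfloor>t (n-1)\<rfloor>\<close> by simp
        also have "\<dots> \<le> t (n-1)" using T0 by simp
        finally show ?thesis .
      qed
      moreover have "i + (n-1) = p" using False assms(1) unfolding i_def by simp
      ultimately show ?thesis using H assms(1) by (metis diff_less less_le_trans zero_less_one)
    qed
  qed
next
  assume H: "\<forall>p < n + nat \<lfloor>t (n-1)\<rfloor>. P p"
  show "\<forall>j<n. \<forall>i. real i \<le> t j \<longrightarrow> P (i+j)"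
  proof (intro allI impI)
    fix j i assume j: "j < n" and i: "real i \<le> t j"
    have "real i \<le> t (n-1)" using i j assms(2) by force
    then have "i \<le> nat \<lfloor>t (n-1)\<rfloor>" by (rule le_nat_floor)
    then show "P (i+j)" using H j by simp
  qed
qed

lemma cyl_card:
  fixes k m :: nat
  assumes "k \<ge> 1"
  shows "Inf {card E | E. finite E \<and> E \<subseteq> shift_space k \<and>
            (\<forall>x\<in>shift_space k. \<exists>y\<in>E. \<forall>i<m. x i = y i)} = k^m"
proof (rule cInf_eq_minimum)
  define P where "P = PiE {..<m} (\<lambda>_. {..<k})"
  have cP: "card P = k^m" unfolding P_def by (simp add: card_PiE)
  have fP: "finite P" unfolding P_def by (simp add: finite_PiE)
  define ext where "ext f = (\<lambda>i. if i < m then f i else (0::nat))" for f :: "nat \<Rightarrow> nat"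
  have inj: "inj_on ext P"
  proof (rule inj_onI)
    fix f g assume "f \<in> P" "g \<in> P" "ext f = ext g"
    then show "f = g" unfolding P_def
      by (intro PiE_ext[of f "{..<m}" "\<lambda>_. {..<k}" g]) (auto simp: ext_def fun_eq_iff, metis)
  qed
  show "k^m \<in> {card E | E. finite E \<and> E \<subseteq> shift_space k \<and>
            (\<forall>x\<in>shift_space k. \<exists>y\<in>E. \<forall>i<m. x i = y i)}"
  proof (intro CollectI exI conjI)
    show "k^m = card (ext ` P)" using inj cP by (simp add: card_image)
    show "finite (ext ` P)" using fP by simp
    show "ext ` P \<subseteq> shift_space k" using assms
      by (auto simp: P_def ext_def shift_space_def PiE_def Pi_def)
    show "\<forall>x\<in>shift_space k. \<exists>y\<in>ext ` P. \<forall>i<m. x i = y i"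
    proof
      fix x assume x: "x \<in> shift_space k"
      have "restrict x {..<m} \<in> P" using x by (auto simp: P_def shift_space_def)
      moreover have "\<forall>i<m. x i = ext (restrict x {..<m}) i" by (simp add: ext_def)
      ultimately show "\<exists>y\<in>ext ` P. \<forall>i<m. x i = y i" by blast
    qed
  qed
  fix c assume "c \<in> {card E | E. finite E \<and> E \<subseteq> shift_space k \<and>
            (\<forall>x\<in>shift_space k. \<exists>y\<in>E. \<forall>i<m. x i = y i)}"
  then obtain E where c: "c = card E" and fE: "finite E" and EX: "E \<subseteq> shift_space k"
    and cov: "\<forall>x\<in>shift_space k. \<exists>y\<in>E. \<forall>i<m. x i = y i" by blast
  have "P \<subseteq> (\<lambda>y. restrict y {..<m}) ` E"
  proof
    fix f assume f: "f \<in> P"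
    have "ext f \<in> shift_space k" using f assms
      by (auto simp: P_def ext_def shift_space_def PiE_def Pi_def)
    then obtain y where y: "y \<in> E" "\<forall>i<m. ext f i = y i" using cov by blast
    have "restrict y {..<m} = f"
      using f y(2) by (intro PiE_ext[of _ "{..<m}" "\<lambda>_. {..<k}"]) (auto simp: P_def ext_def, metis PiE_mem lessThan_iff)
    then show "f \<in> (\<lambda>y. restrict y {..<m}) ` E" using y(1) by blast
  qed
  then have "card P \<le> card ((\<lambda>y. restrict y {..<m}) ` E)" using fE by (intro card_mono) auto
  also have "\<dots> \<le> card E" using fE by (rule card_image_le)
  finally show "k^m \<le> c" using cP c by simp
qed


lemma cover_eq:
  assumes k: "k \<ge> 1" and n: "n \<ge> 1" and e: "\<epsilon> > 0"
  shows "cover_neutral shift_dist shift (shift_space k) \<epsilon> n = k ^ (n + nat \<lfloor>real n * \<epsilon>\<rfloor>)"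
proof -
  let ?m = "n + nat \<lfloor>real n * \<epsilon>\<rfloor>"
  have ne: "0 \<le> real n * \<epsilon>" using e by simp
  have ball: "z \<in> bowen_ball shift_dist shift n x (exp (- real n * \<epsilon>)) \<longleftrightarrow> (\<forall>p<?m. z p = x p)" for x z
  proof -
    have "z \<in> bowen_ball shift_dist shift n x (exp (- real n * \<epsilon>)) \<longleftrightarrow>
          (\<forall>j<n. \<forall>i. real i \<le> real n * \<epsilon> \<longrightarrow> x (i+j) = z (i+j))"
      unfolding bowen_ball_def shift_pow using dist_lt[OF ne] by simp
    also have "\<dots> \<longleftrightarrow> (\<forall>p<?m. x p = z p)"
      using idx[of n "\<lambda>_. real n * \<epsilon>" "\<lambda>p. x p = z p"] n ne by simp
    finally show ?thesis by auto
  qed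
  have cond: "(shift_space k \<subseteq> (\<Union>x\<in>E. bowen_ball shift_dist shift n x (exp (- real n * \<epsilon>))))
      = (\<forall>x\<in>shift_space k. \<exists>y\<in>E. \<forall>i<?m. x i = y i)" for E
    unfolding subset_eq UN_iff ball by (rule refl)
  show ?thesis unfolding cover_neutral_def cond by (rule cyl_card[OF k])
qed

lemma span_eq:
  assumes k: "k \<ge> 1" and n: "n \<ge> 1" and a: "\<alpha> > 0" and e0: "0 < \<epsilon>" and e1: "\<epsilon> < 1"
  shows "span_alpha shift_dist shift \<alpha> (shift_space k) \<epsilon> n
         = k ^ (n + nat \<lfloor>\<alpha> * real (n-1) - ln \<epsilon>\<rfloor>)"
proof -
  define t where "t j = \<alpha> * real j - ln \<epsilon>" for j :: nat
  let ?m = "n + nat \<lfloor>t (n-1)\<rfloor>"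
  have lne: "ln \<epsilon> < 0" using e0 e1 by simp
  have t0: "0 \<le> t j" for j using lne a unfolding t_def by (smt (verit) mult_nonneg_nonneg of_nat_0_le_iff)
  have tm: "\<forall>j<n. 0 \<le> t j \<and> t j \<le> t (n-1)" using t0 a unfolding t_def by auto
  have one: "exp (\<alpha> * real j) * D < \<epsilon> \<longleftrightarrow> D < exp (- t j)" for j D
  proof -
    have "exp (\<alpha> * real j) * D < \<epsilon> \<longleftrightarrow> D < \<epsilon> / exp (\<alpha> * real j)"
      by (simp add: pos_less_divide_eq mult.commute)
    moreover have "\<epsilon> / exp (\<alpha> * real j) = exp (- t j)"
      unfolding t_def using e0 by (simp add: exp_diff exp_minus field_simps)
    ultimately show ?thesis by simp
  qed
  have key: "dist_alpha shift_dist shift \<alpha> n x y < \<epsilon> \<longleftrightarrow> (\<forall>p<?m. x p = y p)" for x y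
  proof -
    have "dist_alpha shift_dist shift \<alpha> n x y < \<epsilon> \<longleftrightarrow>
          (\<forall>j<n. exp (\<alpha> * real j) * shift_dist ((shift ^^ j) x) ((shift ^^ j) y) < \<epsilon>)"
      unfolding dist_alpha_def using n by (subst Max_less_iff) (auto simp: lessThan_empty_iff)
    also have "\<dots> \<longleftrightarrow> (\<forall>j<n. \<forall>i. real i \<le> t j \<longrightarrow> x (i+j) = y (i+j))"
      unfolding one shift_pow using dist_lt[OF t0] by simp
    also have "\<dots> \<longleftrightarrow> (\<forall>p<?m. x p = y p)"
      using idx[of n t "\<lambda>p. x p = y p", OF n tm] by simp
    finally show ?thesis .
  qed
  have "span_alpha shift_dist shift \<alpha> (shift_space k) \<epsilon> n = k ^ ?m"
    unfolding span_alpha_def key by (rule cyl_card[OF k])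
  then show ?thesis by (simp add: t_def)
qed

lemma limsup_ratio:
  fixes m :: "nat \<Rightarrow> nat" and c :: "nat \<Rightarrow> nat"
  assumes k: "k \<ge> 1" and c: "\<forall>n\<ge>1. c n = k ^ m n"
    and b: "\<forall>n\<ge>1. \<bar>real (m n) - L * real n\<bar> \<le> C"
  shows "limsup (\<lambda>n. ereal (ln (real (c n)) / real n)) = ereal (L * ln k)"
proof -
  have lim1: "(\<lambda>n. real (m n) / real n - L) \<longlonglongrightarrow> 0"
  proof (rule Lim_null_comparison[where g = "\<lambda>n. C / real n"])
    show "eventually (\<lambda>n. norm (real (m n) / real n - L) \<le> C / real n) sequentially"
      using eventually_ge_at_top[of 1]
    proof eventually_elim
      case (elim n)
      then have np: "real n > 0" by simp
      have "real (m n) / real n - L = (real (m n) - L * real n) / real n" using np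
        by (simp add: field_simps)
      then have "norm (real (m n) / real n - L) = \<bar>real (m n) - L * real n\<bar> / real n"
        using np by simp
      also have "\<dots> \<le> C / real n" using b elim np by (simp add: divide_right_mono)
      finally show ?case .
    qed
    show "(\<lambda>n. C / real n) \<longlonglongrightarrow> 0" by (rule lim_const_over_n)
  qed
  then have "(\<lambda>n. real (m n) / real n) \<longlonglongrightarrow> L" by (simp add: Lim_null[symmetric])
  then have lim2: "(\<lambda>n. real (m n) / real n * ln (real k)) \<longlonglongrightarrow> L * ln (real k)"
    by (intro tendsto_intros)
  have ev: "eventually (\<lambda>n. real (m n) / real n * ln (real k) = ln (real (c n)) / real n) sequentially"
    using eventually_ge_at_top[of 1]
  proof eventually_elim
    case (elim n)
    then show ?case using c k by (simp add: ln_realpow)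
  qed
  have "(\<lambda>n. ln (real (c n)) / real n) \<longlonglongrightarrow> L * ln (real k)"
    using Lim_transform_eventually[OF lim2 ev] .
  then have "(\<lambda>n. ereal (ln (real (c n)) / real n)) \<longlonglongrightarrow> ereal (L * ln (real k))"
    by (rule tendsto_ereal)
  then show ?thesis by (intro lim_imp_Limsup) auto
qed


lemma floor_bound:
  assumes "0 \<le> x"
  shows "real (nat \<lfloor>x\<rfloor>) \<le> x" "x < real (nat \<lfloor>x\<rfloor>) + 1"
proof -
  have "real (nat \<lfloor>x\<rfloor>) = of_int \<lfloor>x\<rfloor>" using assms by simp
  then show "real (nat \<lfloor>x\<rfloor>) \<le> x" "x < real (nat \<lfloor>x\<rfloor>) + 1"
    by (simp_all add: of_int_floor_le)
qed

theorem mainTheorem13: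
  fixes k :: nat and \<alpha> :: real
  assumes "k \<ge> 2" and "\<alpha> > 0"
  shows "h_top_neutral shift_dist shift (shift_space k) = ereal (ln (real k))
       \<and> ln (real k) < (1 + \<alpha>) * ln (real k)
       \<and> h_top_alpha shift_dist shift \<alpha> (shift_space k) = ereal ((1 + \<alpha>) * ln (real k))"
proof (intro conjI)
  have k1: "k \<ge> 1" using assms by simp
  have lnk: "ln (real k) > 0" using assms by simp
  show "ln (real k) < (1 + \<alpha>) * ln (real k)" using lnk assms(2) by simp
  have eps: "h_top_neutral_eps shift_dist shift (shift_space k) \<epsilon> = ereal ((1 + \<epsilon>) * ln (real k))"
    if e: "\<epsilon> > 0" for \<epsilon>
    unfolding h_top_neutral_eps_def
  proof (rule limsup_ratio[OF k1, where m = "\<lambda>n. n + nat \<lfloor>real n * \<epsilon>\<rfloor>" and C = 1])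
    show "\<forall>n\<ge>1. cover_neutral shift_dist shift (shift_space k) \<epsilon> n = k ^ (n + nat \<lfloor>real n * \<epsilon>\<rfloor>)"
      using cover_eq[OF k1 _ e] by blast
    show "\<forall>n\<ge>1. \<bar>real (n + nat \<lfloor>real n * \<epsilon>\<rfloor>) - (1 + \<epsilon>) * real n\<bar> \<le> 1"
    proof (intro allI impI)
      fix n :: nat
      have ne: "0 \<le> real n * \<epsilon>" using e by simp
      show "\<bar>real (n + nat \<lfloor>real n * \<epsilon>\<rfloor>) - (1 + \<epsilon>) * real n\<bar> \<le> 1"
        using floor_bound[OF ne] by (simp add: algebra_simps)
    qed
  qed
  have "((\<lambda>\<epsilon>. h_top_neutral_eps shift_dist shift (shift_space k) \<epsilon>) \<longlongrightarrow> ereal (ln (real k))) (at_right 0)"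
  proof -
    have "((\<lambda>\<epsilon>::real. ereal ((1 + \<epsilon>) * ln (real k))) \<longlongrightarrow> ereal ((1 + 0) * ln (real k))) (at_right 0)"
      by (intro tendsto_ereal tendsto_intros)
    then have L: "((\<lambda>\<epsilon>::real. ereal ((1 + \<epsilon>) * ln (real k))) \<longlongrightarrow> ereal (ln (real k))) (at_right 0)"
      by simp
    have "eventually (\<lambda>\<epsilon>. ereal ((1 + \<epsilon>) * ln (real k)) = h_top_neutral_eps shift_dist shift (shift_space k) \<epsilon>) (at_right (0::real))"
      using eventually_at_right_less[of "0::real"] by eventually_elim (simp add: eps)
    then show ?thesis by (rule Lim_transform_eventually[OF L])
  qed
  then show "h_top_neutral shift_dist shift (shift_space k) = ereal (ln (real k))"
    unfolding h_top_neutral_def by (intro tendsto_Lim) auto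
  have aeps: "limsup (\<lambda>n. ereal (ln (real (span_alpha shift_dist shift \<alpha> (shift_space k) \<epsilon> n)) / real n))
      = ereal ((1 + \<alpha>) * ln (real k))"
    if e0: "\<epsilon> > 0" and e1: "\<epsilon> < 1" for \<epsilon>
  proof (rule limsup_ratio[OF k1, where m = "\<lambda>n. n + nat \<lfloor>\<alpha> * real (n-1) - ln \<epsilon>\<rfloor>"
        and C = "\<alpha> + \<bar>ln \<epsilon>\<bar> + 1"])
    show "\<forall>n\<ge>1. span_alpha shift_dist shift \<alpha> (shift_space k) \<epsilon> n = k ^ (n + nat \<lfloor>\<alpha> * real (n-1) - ln \<epsilon>\<rfloor>)"
      using span_eq[OF k1 _ assms(2) e0 e1] by blast
    show "\<forall>n\<ge>1. \<bar>real (n + nat \<lfloor>\<alpha> * real (n-1) - ln \<epsilon>\<rfloor>) - (1 + \<alpha>) * real n\<bar> \<le> \<alpha> + \<bar>ln \<epsilon>\<bar> + 1"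
    proof (intro allI impI)
      fix n :: nat assume n: "n \<ge> 1"
      have lne: "ln \<epsilon> < 0" using e0 e1 by simp
      have ne: "0 \<le> \<alpha> * real (n-1) - ln \<epsilon>" using lne assms(2)
        by (smt (verit) mult_nonneg_nonneg of_nat_0_le_iff)
      have rn: "real (n-1) = real n - 1" using n by simp
      define X where "X = \<alpha> * real (n-1) - ln \<epsilon>"
      have X0: "0 \<le> X" using ne X_def by simp
      have Xe: "X = \<alpha> * real n - \<alpha> - ln \<epsilon>" unfolding X_def rn by (simp add: algebra_simps)
      have eq: "real (n + nat \<lfloor>X\<rfloor>) - (1 + \<alpha>) * real n = real (nat \<lfloor>X\<rfloor>) - \<alpha> * real n"
        by (simp add: algebra_simps)
      have "\<bar>real (nat \<lfloor>X\<rfloor>) - \<alpha> * real n\<bar> \<le> \<alpha> + \<bar>ln \<epsilon>\<bar> + 1"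
        using floor_bound[OF X0] Xe lne assms(2) by linarith
      then show "\<bar>real (n + nat \<lfloor>\<alpha> * real (n-1) - ln \<epsilon>\<rfloor>) - (1 + \<alpha>) * real n\<bar> \<le> \<alpha> + \<bar>ln \<epsilon>\<bar> + 1"
        using eq unfolding X_def by simp
    qed
  qed
  have "((\<lambda>\<epsilon>. limsup (\<lambda>n. ereal (ln (real (span_alpha shift_dist shift \<alpha> (shift_space k) \<epsilon> n)) / real n)))
        \<longlongrightarrow> ereal ((1 + \<alpha>) * ln (real k))) (at_right 0)"
  proof -
    have "eventually (\<lambda>\<epsilon>. ereal ((1 + \<alpha>) * ln (real k)) =
        limsup (\<lambda>n. ereal (ln (real (span_alpha shift_dist shift \<alpha> (shift_space k) \<epsilon> n)) / real n))) (at_right (0::real))"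
    proof -
      have "eventually (\<lambda>x. x \<in> {0<..<1}) (at_right (0::real))"
        by (rule eventually_at_right_real) simp
      then show ?thesis
      proof eventually_elim
        case (elim x)
        then show ?case using aeps[of x] by simp
      qed
    qed
    then show ?thesis by (rule Lim_transform_eventually[OF tendsto_const])
  qed
  then show "h_top_alpha shift_dist shift \<alpha> (shift_space k) = ereal ((1 + \<alpha>) * ln (real k))"
    unfolding h_top_alpha_def by (intro tendsto_Lim) auto
qed

end
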